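(* Let $\delta\ge2$ be an integer, $n=4\delta+2$, and $q$ a prime power with $n\mid(q-1)$. Let $b$ be a positive integer with $\gcd(b,n)=1$ and $t\in\{0,\dots,n-1\}$. Put $$A=\{\alpha^{t},\alpha^{t+b},\alpha^{t+(\delta+1)b},\alpha^{t+(2\delta+1)b}\},\qquad B=\{1,\alpha^{b},\dots,\alpha^{(\delta-2)b}\}.$$ Then $C_{AB}$ is an optimal cyclic $(\delta+2,\delta)$-LRC over $\mathbb{F}_q$ with parameters $[4\delta+2,\ \delta+4,\ 2\delta]$.
   Context: Let $q$ be a prime power and $n\mid(q-1)$, so the set $R_n$ of all $n$-th roots of unity lies in $\mathbb{F}_q$; let $\alpha\in\mathbb{F}_q$ be a primitive $n$-th root of unity. For $A,B\subseteq R_n$, $AB=\{\beta\gamma:\beta\in A,\gamma\in B\}$, and for $Z\subseteq R_n$, $C_Z$ denotes the cyclic code of length $n$ over $\mathbb{F}_q$ with complete defining set $Z$, i.e. the ideal generated by $\prod_{\beta\in Z}(x-\beta)$ in $\mathbb{F}_q[x]/(x^n-1)$, identified with a subspace of $\mathbb{F}_q^n$; it has dimension $n-|Z|$. Locality: for a linear code $C\subseteq\mathbb{F}_q^n$ and integers $r\ge1$, $\delta\ge2$, the $i$-th coordinate has $(r,\delta)$-locality if there is $S_i\subseteq\{1,\dots,n\}$ with $i\in S_i$, $|S_i|\le r+\delta-1$ such that the punctured code $C|_{S_i}$ has minimum distance at least $\delta$; $C$ is an $(r,\delta)$-LRC if every coordinate has $(r,\delta)$-locality. An $[n,k,d]$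 $(r,\delta)$-LRC is optimal if $d=n-k-(\lceil k/r\rceil-1)(\delta-1)+1$ (this quantity is always an upper bound on $d$). *)

theory Defs
  imports Main "HOL-Computational_Algebra.Polynomial" "HOL-Library.Function_Algebras"
begin

(* Vectors of F_q^n are represented as functions nat => 'a; coordinates are 0..n-1,
   and codewords vanish at all indices >= n. *)

definition set_mult :: "'a::times set \<Rightarrow> 'a set \<Rightarrow> 'a set" where
  "set_mult A B = {x * y | x y. x \<in> A \<and> y \<in> B}"

definition prim_root :: "nat \<Rightarrow> 'a::field \<Rightarrow> bool" where
  "prim_root n a \<longleftrightarrow> a ^ n = 1 \<and> (\<forall>k. 0 < k \<and> k < n \<longrightarrow> a ^ k \<noteq> 1)"

definition gen_poly :: "'a::field set \<Rightarrow> 'a poly" where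
  "gen_poly Z = (\<Prod>\<beta>\<in>Z. [:-\<beta>, 1:])"

(* cyclic code of length n with complete defining set Z: the ideal generated by gen_poly Z
   in F[x]/(x^n - 1), each residue identified with its coefficient vector (degree < n) *)
definition cyclic_code :: "nat \<Rightarrow> 'a::field set \<Rightarrow> (nat \<Rightarrow> 'a) set" where
  "cyclic_code n Z =
     {c. \<exists>h. c = (\<lambda>i. coeff ((h * gen_poly Z) mod (monom 1 n - 1)) i)}"

definition hamming_wt :: "nat \<Rightarrow> (nat \<Rightarrow> 'a::zero) \<Rightarrow> nat" where
  "hamming_wt n c = card {i. i < n \<and> c i \<noteq> 0}"

definition min_dist :: "nat \<Rightarrow> (nat \<Rightarrow> 'a::zero) set \<Rightarrow> nat" where
  "min_dist n C = Min {hamming_wt n c | c. c \<in> C \<and> (\<exists>i<n. c i \<noteq> 0)}"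

definition code_dim :: "(nat \<Rightarrow> 'a::field) set \<Rightarrow> nat" where
  "code_dim C = vector_space.dim (\<lambda>a v. (\<lambda>i. a * v i)) C"

(* the punctured code C|_S has minimum distance at least delta:
   every nonzero codeword of C|_S has weight (on S) at least delta *)
definition punct_dist_ge :: "(nat \<Rightarrow> 'a::zero) set \<Rightarrow> nat set \<Rightarrow> nat \<Rightarrow> bool" where
  "punct_dist_ge C S \<delta> \<longleftrightarrow>
     (\<forall>c\<in>C. (\<exists>i\<in>S. c i \<noteq> 0) \<longrightarrow> \<delta> \<le> card {i\<in>S. c i \<noteq> 0})"

definition has_locality :: "nat \<Rightarrow> (nat \<Rightarrow> 'a::zero) set \<Rightarrow> nat \<Rightarrow> nat \<Rightarrow> nat \<Rightarrow> bool" where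
  "has_locality n C r \<delta> i \<longleftrightarrow>
     (\<exists>S. S \<subseteq> {0..<n} \<and> i \<in> S \<and> card S \<le> r + \<delta> - 1 \<and> punct_dist_ge C S \<delta>)"

definition is_LRC :: "nat \<Rightarrow> (nat \<Rightarrow> 'a::zero) set \<Rightarrow> nat \<Rightarrow> nat \<Rightarrow> bool" where
  "is_LRC n C r \<delta> \<longleftrightarrow> 1 \<le> r \<and> 2 \<le> \<delta> \<and> (\<forall>i<n. has_locality n C r \<delta> i)"

definition optimal_LRC :: "nat \<Rightarrow> (nat \<Rightarrow> 'a::field) set \<Rightarrow> nat \<Rightarrow> nat \<Rightarrow> bool" where
  "optimal_LRC n C r \<delta> \<longleftrightarrow> is_LRC n C r \<delta> \<and>
     int (min_dist n C) = int n - int (code_dim C)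
        - (\<lceil>real (code_dim C) / real r\<rceil> - 1) * (int \<delta> - 1) + 1"

end

theory Submission
  imports Defs
begin


lemma sum_fun_apply: "(\<Sum>v\<in>T. f v) i = (\<Sum>v\<in>T. f v i)"
  for f :: "'b \<Rightarrow> nat \<Rightarrow> 'a::comm_monoid_add"
  by (induction T rule: infinite_finite_induct) auto

interpretation fv: vector_space "(\<lambda>a v. (\<lambda>i. a * v i)) :: 'a::field \<Rightarrow> (nat \<Rightarrow> 'a) \<Rightarrow> (nat \<Rightarrow> 'a)"
  by unfold_locales (auto simp: algebra_simps fun_eq_iff)

lemma vander_zero:
  fixes x u :: "nat \<Rightarrow> 'a::field"
  assumes fin: "finite S" and inj: "inj_on x S"
    and eq: "\<And>k. k < card S \<Longrightarrow> (\<Sum>i\<in>S. u i * x i ^ k) = 0"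
    and i0: "i0 \<in> S"
  shows "u i0 = 0"
proof -
  define P where "P = (\<Prod>i\<in>S-{i0}. [:- x i, 1:])"
  have degP: "degree P \<le> card S - 1"
  proof -
    have "degree P \<le> sum (degree \<circ> (\<lambda>i. [:- x i, 1:])) (S-{i0})"
      unfolding P_def by (rule degree_prod_sum_le) (use fin in auto)
    also have "... = card (S - {i0})" by simp
    also have "... = card S - 1" using fin i0 by simp
    finally show ?thesis .
  qed
  have cS: "card S > 0" using fin i0 card_gt_0_iff by blast
  have "(\<Sum>i\<in>S. u i * poly P (x i)) = (\<Sum>i\<in>S. u i * (\<Sum>k\<le>degree P. coeff P k * x i ^ k))"
    by (simp add: poly_altdef)
  also have "... = (\<Sum>i\<in>S. \<Sum>k\<le>degree P. coeff P k * (u i * x i ^ k))"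
    by (simp add: sum_distrib_left mult_ac)
  also have "... = (\<Sum>k\<le>degree P. \<Sum>i\<in>S. coeff P k * (u i * x i ^ k))"
    by (rule sum.swap)
  also have "... = (\<Sum>k\<le>degree P. coeff P k * (\<Sum>i\<in>S. u i * x i ^ k))"
    by (simp add: sum_distrib_left)
  also have "... = 0"
  proof (intro sum.neutral ballI)
    fix k assume "k \<in> {..degree P}"
    then have "k < card S" using degP cS by auto
    then show "coeff P k * (\<Sum>i\<in>S. u i * x i ^ k) = 0" using eq by simp
  qed
  finally have s0: "(\<Sum>i\<in>S. u i * poly P (x i)) = 0" .
  have z: "poly P (x i) = 0" if "i \<in> S - {i0}" for i
    unfolding P_def poly_prod using that fin by (auto intro: prod_zero)
  have "(\<Sum>i\<in>S. u i * poly P (x i)) = u i0 * poly P (x i0) + (\<Sum>i\<in>S-{i0}. u i * poly P (x i))"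
    using fin i0 by (simp add: sum.remove)
  also have "(\<Sum>i\<in>S-{i0}. u i * poly P (x i)) = 0" using z by simp
  finally have "u i0 * poly P (x i0) = 0" using s0 by simp
  moreover have "poly P (x i0) \<noteq> 0"
  proof -
    have "x i0 \<noteq> x i" if "i \<in> S - {i0}" for i
      using inj i0 that by (auto dest: inj_onD)
    then show ?thesis unfolding P_def poly_prod using fin by auto
  qed
  ultimately show ?thesis by simp
qed



lemma gen_poly_dvd:
  assumes "finite Z" "\<forall>z\<in>Z. poly p z = 0"
  shows "gen_poly Z dvd (p :: 'a::field poly)"
  using assms
proof (induction Z arbitrary: p rule: finite_induct)
  case empty then show ?case by (simp add: gen_poly_def)
next
  case (insert z F)
  have "[:-z,1:] dvd p" using insert.prems by (simp add: poly_eq_0_iff_dvd)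
  then obtain r where r: "p = [:-z,1:] * r" by (auto elim: dvdE)
  have "\<forall>w\<in>F. poly r w = 0"
  proof
    fix w assume w: "w \<in> F"
    then have "w \<noteq> z" using insert by auto
    moreover have "poly p w = 0" using insert.prems w by auto
    ultimately show "poly r w = 0" using r by auto
  qed
  then have "gen_poly F dvd r" using insert.IH by blast
  have e: "gen_poly (insert z F) = [:-z,1:] * gen_poly F"
    unfolding gen_poly_def by (rule prod.insert[OF insert.hyps])
  show ?case unfolding e r by (rule mult_dvd_mono) (auto simp: \<open>gen_poly F dvd r\<close>)
qed

lemma gen_poly_root: "finite Z \<Longrightarrow> z \<in> Z \<Longrightarrow> poly (gen_poly Z) z = 0"
  unfolding gen_poly_def poly_prod by (auto intro: prod_zero)

lemma gen_poly_degree: "finite Z \<Longrightarrow> degree (gen_poly Z) = card Z"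
  unfolding gen_poly_def by (subst degree_prod_eq_sum_degree) auto

lemma gen_poly_nz: "gen_poly (Z::'a::field set) \<noteq> 0"
proof (cases "finite Z")
  case True then show ?thesis unfolding gen_poly_def by (auto simp: prod_zero_iff)
next
  case False then show ?thesis unfolding gen_poly_def by simp
qed

lemma degM: "0 < n \<Longrightarrow> degree (monom (1::'a::field) n - 1) = n"
proof -
  assume n: "0 < n"
  have "degree (monom (1::'a) n + (- 1)) = degree (monom (1::'a) n)"
    by (rule degree_add_eq_left) (use n in \<open>simp add: degree_monom_eq\<close>)
  then show ?thesis by (metis diff_conv_add_uminus degree_monom_eq one_neq_zero)
qed

lemma polyM: "poly (monom (1::'a::field) n - 1) z = z ^ n - 1"
  by (simp add: poly_monom)

lemma code_char:
  fixes Z :: "'a::field set"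
  assumes fin: "finite Z" and rt: "\<forall>z\<in>Z. z ^ n = 1" and n: "0 < n"
  shows "cyclic_code n Z = {coeff p | p. degree p < n \<and> (\<forall>z\<in>Z. poly p z = 0)}"
proof (intro set_eqI iffI)
  fix c assume "c \<in> cyclic_code n Z"
  then obtain h where c: "c = coeff ((h * gen_poly Z) mod (monom 1 n - 1))"
    unfolding cyclic_code_def by auto
  define M :: "'a poly" where "M = monom 1 n - 1"
  define r where "r = (h * gen_poly Z) mod M"
  have M0: "M \<noteq> 0"
  proof
    assume "M = 0"
    then have "degree (monom (1::'a) n - 1) = 0" using M_def by simp
    with degM[OF n, where 'a='a] n show False by simp
  qed
  have "r = 0 \<or> degree r < n" using degree_mod_less[OF M0, of "h * gen_poly Z"]
    degM[OF n, where 'a='a] unfolding r_def M_def by auto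
  then have dr: "degree r < n" using n by auto
  have "\<forall>z\<in>Z. poly r z = 0"
  proof
    fix z assume z: "z \<in> Z"
    have e: "h * gen_poly Z = ((h * gen_poly Z) div M) * M + r"
      unfolding r_def by simp
    have "poly (h * gen_poly Z) z = 0" using gen_poly_root[OF fin z] by simp
    moreover have "poly M z = 0" using rt z unfolding M_def polyM by simp
    ultimately show "poly r z = 0" using arg_cong[OF e, of "\<lambda>q. poly q z"] gen_poly_root[OF fin z] by simp
  qed
  then show "c \<in> {coeff p | p. degree p < n \<and> (\<forall>z\<in>Z. poly p z = 0)}"
    using c dr unfolding r_def M_def by blast
next
  fix c assume "c \<in> {coeff p | p. degree p < n \<and> (\<forall>z\<in>Z. poly p z = 0)}"
  then obtain p where c: "c = coeff p" and dp: "degree p < n" and z: "\<forall>z\<in>Z. poly p z = 0" by blast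
  obtain h where p: "p = gen_poly Z * h" using gen_poly_dvd[OF fin z] by (auto elim: dvdE)
  have "(h * gen_poly Z) mod (monom 1 n - 1) = p"
    using p dp degM[OF n, where 'a='a] by (simp add: mod_poly_less mult.commute)
  then show "c \<in> cyclic_code n Z" unfolding cyclic_code_def c by (auto intro!: exI[of _ h])
qed

lemma code_dim_gen:
  fixes Z :: "'a::field set"
  assumes fin: "finite Z" and rt: "\<forall>z\<in>Z. z ^ n = 1" and n: "0 < n" and cZ: "card Z \<le> n"
  shows "code_dim (cyclic_code n Z) = n - card Z"
proof -
  define g where "g = gen_poly Z"
  define k where "k = n - card Z"
  define E where "E i = coeff (monom 1 i * g)" for i
  have g0: "g \<noteq> 0" unfolding g_def by (rule gen_poly_nz)
  have dg: "degree g = card Z" unfolding g_def using fin by (rule gen_poly_degree)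
  have degE: "degree (monom 1 i * g) = i + card Z" for i
    using g0 dg by (simp add: degree_mult_eq degree_monom_eq)
  have injE: "inj_on E {..<k}"
  proof
    fix i j assume "E i = E j"
    then have "monom 1 i * g = monom 1 j * g" unfolding E_def by (metis coeff_inject)
    then have "degree (monom 1 i * g) = degree (monom 1 j * g)" by (rule arg_cong)
    then show "i = j" using degE[of i] degE[of j] by simp
  qed
  have CC: "cyclic_code n Z = {coeff p | p. degree p < n \<and> (\<forall>z\<in>Z. poly p z = 0)}"
    by (rule code_char[OF fin rt n])
  show ?thesis unfolding code_dim_def
  proof (rule fv.dim_unique[where B = "E ` {..<k}"])
    show "E ` {..<k} \<subseteq> cyclic_code n Z"
    proof
      fix v assume "v \<in> E ` {..<k}"
      then obtain i where i: "i < k" and v: "v = E i" by auto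
      have d1: "degree (monom 1 i * g) < n" using degE[of i] i k_def cZ by simp
      have z1: "\<forall>z\<in>Z. poly (monom 1 i * g) z = 0"
        by (simp add: g_def gen_poly_root[OF fin])
      show "v \<in> cyclic_code n Z" unfolding CC v E_def
        using d1 z1 by blast
    qed
  next
    show "cyclic_code n Z \<subseteq> fv.span (E ` {..<k})"
    proof
      fix c assume "c \<in> cyclic_code n Z"
      then obtain p where c: "c = coeff p" and dp: "degree p < n" and z: "\<forall>z\<in>Z. poly p z = 0"
        unfolding CC by blast
      obtain h where p: "p = g * h" using gen_poly_dvd[OF fin z] g_def by (auto elim: dvdE)
      have dh: "h = 0 \<or> degree h < k"
        using dp p dg k_def g0 by (cases "h = 0") (auto simp: degree_mult_eq)
      have hs: "h = (\<Sum>i<k. monom (coeff h i) i)"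
      proof (cases "h = 0")
        case True then show ?thesis by simp
      next
        case False
        then have "k > 0" "degree h \<le> k - 1" using dh by auto
        then have "h = (\<Sum>i\<le>k-1. monom (coeff h i) i)" using poly_as_sum_of_monoms' by metis
        also have "{..k-1} = {..<k}" using \<open>k>0\<close> by auto
        finally show ?thesis .
      qed
      have "c = (\<Sum>i<k. (\<lambda>j. coeff h i * E i j))"
      proof
        fix j
        have "c j = coeff ((\<Sum>i<k. monom (coeff h i) i) * g) j"
          using c p hs by (simp add: mult.commute)
        also have "... = (\<Sum>i<k. coeff (monom (coeff h i) i * g) j)"
          by (simp add: sum_distrib_right coeff_sum)
        also have "... = (\<Sum>i<k. coeff h i * E i j)"
          unfolding E_def coeff_monom_mult by (auto intro: sum.cong)
        finally show "c j = (\<Sum>i<k. (\<lambda>j. coeff h i * E i j)) j" by (simp add: sum_fun_apply)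
      qed
      also have "... \<in> fv.span (E ` {..<k})"
        by (intro fv.span_sum fv.span_scale fv.span_base) auto
      finally show "c \<in> fv.span (E ` {..<k})" .
    qed
  next
    show "fv.independent (E ` {..<k})"
      unfolding fv.dependent_explicit
    proof (clarify)
      fix T u v
      assume fT: "finite T" and TE: "T \<subseteq> E ` {..<k}"
        and s: "(\<Sum>v\<in>T. (\<lambda>i. u v * v i)) = 0" and vT: "v \<in> T" and uv: "u v \<noteq> 0"
      define I where "I = {i. i < k \<and> E i \<in> T}"
      have TI: "T = E ` I" using TE unfolding I_def by auto
      have injI: "inj_on E I" using injE by (rule inj_on_subset) (auto simp: I_def)
      define Q where "Q = (\<Sum>i\<in>I. monom (u (E i)) i)"
      have "coeff (Q * g) j = 0" for j
      proof -
        have "coeff (Q * g) j = (\<Sum>i\<in>I. u (E i) * E i j)"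
          unfolding Q_def E_def by (simp add: sum_distrib_right coeff_sum coeff_monom_mult) (rule sum.cong; simp)
        also have "... = (\<Sum>v\<in>T. (\<lambda>i. u v * v i)) j"
          unfolding TI sum_fun_apply by (simp add: sum.reindex[OF injI])
        finally show ?thesis using s by simp
      qed
      then have "Q * g = 0" by (simp add: poly_eq_iff)
      then have Q0: "Q = 0" using g0 by simp
      obtain i where iI: "i \<in> I" and vi: "v = E i" using vT TI by auto
      have "coeff Q i = u (E i)"
        unfolding Q_def coeff_sum using iI I_def
        by (simp add: coeff_monom sum.delta' [unfolded])
      then show False using Q0 uv vi by simp
    qed
  next
    show "card (E ` {..<k}) = n - card Z" using injE k_def by (simp add: card_image)
  qed
qed



lemma poly_sum_lt: "degree p < n \<Longrightarrow> poly p z = (\<Sum>i<n. coeff p i * z ^ i)"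
  for p :: "'a::comm_ring_1 poly"
proof -
  assume d: "degree p < n"
  have "poly p z = (\<Sum>i\<le>degree p. coeff p i * z ^ i)" by (rule poly_altdef)
  also have "... = (\<Sum>i<n. coeff p i * z ^ i)"
    by (rule sum.mono_neutral_left) (use d in \<open>auto simp: coeff_eq_0\<close>)
  finally show ?thesis .
qed

lemma sum_even_odd: "(\<Sum>i<2*m. f i) = (\<Sum>i<m. f (2*i)) + (\<Sum>i<m. f (2*i+1))"
  for m :: nat and f :: "nat \<Rightarrow> 'b::comm_monoid_add"
  by (induction m) (simp_all add: algebra_simps)

lemma weight_bound:
  fixes u y :: "nat \<Rightarrow> 'a::field"
  assumes inj: "inj_on y {..<m}" and ynz: "\<forall>i<m. y i \<noteq> 0"
    and ev: "\<forall>k<L. (\<Sum>i<m. u i * y i ^ (s + k)) = 0"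
    and nz: "\<exists>i<m. u i \<noteq> 0"
  shows "L < card {i. i < m \<and> u i \<noteq> 0}"
proof (rule ccontr)
  define S where "S = {i. i < m \<and> u i \<noteq> 0}"
  assume "\<not> L < card {i. i < m \<and> u i \<noteq> 0}"
  then have cL: "card S \<le> L" unfolding S_def by simp
  have fS: "finite S" unfolding S_def by simp
  have injS: "inj_on y S" using inj by (rule inj_on_subset) (auto simp: S_def)
  obtain i0 where i0: "i0 < m" "u i0 \<noteq> 0" using nz by blast
  then have i0S: "i0 \<in> S" unfolding S_def by simp
  have "(\<lambda>i. u i * y i ^ s) i0 = 0"
  proof (rule vander_zero[OF fS injS _ i0S])
    fix k assume k: "k < card S"
    have "(\<Sum>i<m. u i * y i ^ (s + k)) = (\<Sum>i\<in>S. u i * y i ^ (s+k))"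
      by (rule sum.mono_neutral_right) (auto simp: S_def)
    also have "... = (\<Sum>i\<in>S. u i * y i ^ s * y i ^ k)"
      by (simp add: power_add mult.assoc)
    finally show "(\<Sum>i\<in>S. u i * y i ^ s * y i ^ k) = 0" using ev k cL by simp
  qed
  then show False using i0 ynz by simp
qed

lemma card_even: "card {x. x < 2*m \<and> even x \<and> P x} = card {i. i < m \<and> P (2*i)}"
  for m :: nat and P :: "nat \<Rightarrow> bool"
proof -
  have "{x. x < 2*m \<and> even x \<and> P x} = (\<lambda>i. 2*i) ` {i. i < m \<and> P (2*i)}"
  proof (intro set_eqI iffI)
    fix x assume "x \<in> {x. x < 2*m \<and> even x \<and> P x}"
    then have x: "x < 2*m" "even x" "P x" by auto
    then obtain i where i: "x = 2*i" by (metis evenE)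
    then show "x \<in> (\<lambda>i. 2*i) ` {i. i < m \<and> P (2*i)}" using x by auto
  qed auto
  then show ?thesis by (simp add: card_image inj_on_def)
qed

lemma card_odd: "card {x. x < 2*m \<and> odd x \<and> P x} = card {i. i < m \<and> P (2*i+1)}"
  for m :: nat and P :: "nat \<Rightarrow> bool"
proof -
  have "{x. x < 2*m \<and> odd x \<and> P x} = (\<lambda>i. 2*i+1) ` {i. i < m \<and> P (2*i+1)}"
  proof (intro set_eqI iffI)
    fix x assume "x \<in> {x. x < 2*m \<and> odd x \<and> P x}"
    then have x: "x < 2*m" "odd x" "P x" by auto
    then obtain i where i: "x = 2*i+1" by (metis oddE)
    then show "x \<in> (\<lambda>i. 2*i+1) ` {i. i < m \<and> P (2*i+1)}" using x by auto
  qed auto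
  then show ?thesis by (simp add: card_image inj_on_def)
qed

lemma card_split: "card {x. x < 2*m \<and> P x} = card {i. i < m \<and> P (2*i)} + card {i. i < m \<and> P (2*i+1)}"
  for m :: nat and P :: "nat \<Rightarrow> bool"
proof -
  have "{x. x < 2*m \<and> P x} = {x. x < 2*m \<and> even x \<and> P x} \<union> {x. x < 2*m \<and> odd x \<and> P x}"
    by auto
  moreover have "card ({x. x < 2*m \<and> even x \<and> P x} \<union> {x. x < 2*m \<and> odd x \<and> P x})
     = card {x. x < 2*m \<and> even x \<and> P x} + card {x. x < 2*m \<and> odd x \<and> P x}"
    by (rule card_Un_disjoint) auto
  ultimately show ?thesis by (simp only: card_even card_odd)
qed

lemma coprime_d: "coprime (d::nat) (2*d+1)"
proof -
  have "gcd d (2*d+1) = gcd d 1" by (metis gcd_add_mult mult.commute)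
  then show ?thesis by (simp add: coprime_iff_gcd_eq_1)
qed

lemma two_eq: "(a::'a::field) + z*b = 0 \<Longrightarrow> a + (-z)*b = 0 \<Longrightarrow> (2::'a) \<noteq> 0 \<Longrightarrow> z \<noteq> 0 \<Longrightarrow> a = 0 \<and> b = 0"
proof -
  assume h1: "a + z*b = 0" and h2: "a + (-z)*b = 0" and t: "(2::'a) \<noteq> 0" and z: "z \<noteq> 0"
  have "2*z*b = (a + z*b) - (a + (-z)*b)" by (simp add: algebra_simps)
  also have "... = 0 - 0" by (simp only: h1 h2)
  finally have "2*z*b = 0" by simp
  then have b: "b = 0" using t z by simp
  then show ?thesis using h1 by simp
qed

lemma rmod_aux:
  fixes d k q :: nat
  assumes k: "k < 2*d - 1" and h: "d*(3+k) = (2*d+1)*q + r" and r: "r = d \<or> r = 2*d"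
  shows False
proof -
  consider "r = d" | "r = 2*d" using r by blast
  then show False
  proof cases
    case 1
    have "(2*d+1)*(3+k) = (2*d+1)*(2*q+1) + (2+k)" using h 1 by (simp add: algebra_simps)
    then have "(2*d+1) dvd (2+k)"
      by (metis dvd_add_right_iff dvd_triv_left)
    then have "2*d+1 \<le> 2+k" by (rule dvd_imp_le) simp
    then show False using k by simp
  next
    case 2
    have "(2*d+1)*(3+k) = (2*d+1)*(2*q+2) + (1+k)" using h 2 by (simp add: algebra_simps)
    then have "(2*d+1) dvd (1+k)"
      by (metis dvd_add_right_iff dvd_triv_left)
    then have "2*d+1 \<le> 1+k" by (rule dvd_imp_le) simp
    then show False using k by simp
  qed
qed

lemma rmod: "k < 2*d - 1 \<Longrightarrow> (d*(3+k)) mod (2*d+1) \<noteq> d \<and> (d*(3+k)) mod (2*d+1) \<noteq> 2*d"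
  for d k :: nat
  using rmod_aux[of k d "(d*(3+k)) div (2*d+1)" "(d*(3+k)) mod (2*d+1)"]
  by (metis div_mult_mod_eq mult.commute)


context
  fixes \<alpha> :: "'a::field" and \<delta> n b t :: nat
  assumes d2: "2 \<le> \<delta>" and nd: "n = 4*\<delta>+2" and pr: "prim_root n \<alpha>" and cop: "coprime b n"
begin

lemma n_pos: "0 < n" using nd by simp

lemma a_n: "\<alpha> ^ n = 1" using pr by (simp add: prim_root_def)

lemma a_nz: "\<alpha> \<noteq> 0" using a_n n_pos by (metis power_0_left zero_neq_one gr_implies_not0)

lemma bb_n: "(\<alpha>^b) ^ n = 1" using a_n by (metis power_mult power_mult_distrib mult.commute power_one)

lemma b_mod: "(\<alpha>^b) ^ x = (\<alpha>^b) ^ (x mod n)"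
proof -
  have "(\<alpha>^b) ^ x = (\<alpha>^b) ^ (n * (x div n) + x mod n)" by simp
  also have "... = ((\<alpha>^b) ^ n) ^ (x div n) * (\<alpha>^b) ^ (x mod n)"
    by (simp only: power_add power_mult)
  finally show ?thesis using bb_n by simp
qed

lemma a_eq1: "\<alpha> ^ x = 1 \<longleftrightarrow> n dvd x"
proof -
  have "\<alpha> ^ x = \<alpha> ^ (n * (x div n) + x mod n)" by simp
  also have "... = (\<alpha> ^ n) ^ (x div n) * \<alpha> ^ (x mod n)"
    by (simp only: power_add power_mult)
  finally have e: "\<alpha> ^ x = \<alpha> ^ (x mod n)" using a_n by simp
  have "x mod n < n" using n_pos by simp
  then show ?thesis using pr e unfolding prim_root_def
    by (metis dvd_eq_mod_eq_0 gr0I power_0)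
qed

lemma b_eq1: "(\<alpha> ^ b) ^ x = 1 \<longleftrightarrow> n dvd x"
proof -
  have "(\<alpha> ^ b) ^ x = \<alpha> ^ (b * x)" by (simp add: power_mult)
  moreover have "n dvd b * x \<longleftrightarrow> n dvd x"
    using cop by (metis coprime_commute coprime_dvd_mult_right_iff)
  ultimately show ?thesis using a_eq1 by simp
qed

lemma b_nz: "\<alpha> ^ b \<noteq> 0" using a_nz by simp

lemma b_inj_aux: "x \<le> y \<Longrightarrow> y < n \<Longrightarrow> (\<alpha>^b)^x = (\<alpha>^b)^y \<Longrightarrow> x = y"
proof -
  assume xy: "x \<le> y" "y < n" "(\<alpha>^b)^x = (\<alpha>^b)^y"
  have "(\<alpha>^b)^y = (\<alpha>^b)^(x + (y-x))" using xy by simp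
  also have "... = (\<alpha>^b)^x * (\<alpha>^b)^(y-x)" by (simp only: power_add)
  finally have "(\<alpha>^b)^y = (\<alpha>^b)^x * (\<alpha>^b)^(y-x)" .
  then have "(\<alpha>^b)^x * (\<alpha>^b)^(y-x) = (\<alpha>^b)^x * 1" using xy by simp
  then have "(\<alpha>^b)^(y-x) = 1" using a_nz by auto
  then have "n dvd y - x" using b_eq1 by simp
  moreover have "y - x < n" using xy by simp
  ultimately show "x = y" using xy by (metis dvd_imp_le le_antisym not_le diff_is_0_eq gr0I)
qed

lemma b_inj: "x < n \<Longrightarrow> y < n \<Longrightarrow> (\<alpha>^b)^x = (\<alpha>^b)^y \<Longrightarrow> x = y"
  using b_inj_aux by (metis nat_le_linear)

lemma b_m: "(\<alpha>^b)^(2*\<delta>+1) = -1"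
proof -
  define y where "y = (\<alpha>^b)^(2*\<delta>+1)"
  have "y * y = (\<alpha>^b)^n" unfolding y_def nd by (simp flip: power_add)
  then have yy: "y * y = 1" using bb_n by simp
  have "y \<noteq> 1" unfolding y_def b_eq1 nd by (auto dest: dvd_imp_le)
  have "(y - 1) * (y + 1) = 0" using yy by (simp add: algebra_simps)
  then show ?thesis using \<open>y \<noteq> 1\<close> unfolding y_def[symmetric]
    by (simp add: eq_neg_iff_add_eq_0)
qed

lemma two_nz: "(2::'a) \<noteq> 0"
proof
  assume "(2::'a) = 0"
  then have "(1::'a) + 1 = 0" by simp
  then have "(-1::'a) = 1" by (metis eq_neg_iff_add_eq_0)
  then have "(\<alpha>^b)^(2*\<delta>+1) = 1" using b_m by simp
  then show False unfolding b_eq1 nd by (auto dest: dvd_imp_le)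
qed

abbreviation zz :: "nat \<Rightarrow> 'a" where "zz j \<equiv> \<alpha>^t * (\<alpha>^b)^j"
abbreviation "Es \<equiv> {..<\<delta>} \<union> {\<delta>+1..<2*\<delta>} \<union> {2*\<delta>+1..<3*\<delta>}"
abbreviation "Zs \<equiv> zz ` Es"

lemma n2m: "n = 2*(2*\<delta>+1)" using nd by simp

lemma zz_neg: "zz (j + (2*\<delta>+1)) = - zz j"
proof -
  have "(\<alpha> ^ b) ^ (j + (2 * \<delta> + 1)) = - ((\<alpha> ^ b) ^ j)" by (simp only: power_add[of "\<alpha>^b" j "2*\<delta>+1"] b_m) simp
  then show ?thesis by simp
qed

lemma zz_nz: "zz j \<noteq> 0" using a_nz by simp

lemma Zs_rt: "\<forall>z\<in>Zs. z ^ n = 1"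
proof
  fix z assume "z \<in> Zs"
  then obtain e where z: "z = zz e" by auto
  have "z ^ n = (\<alpha>^n)^t * ((\<alpha>^b)^n)^e" unfolding z
    by (metis power_mult power_mult_distrib mult.commute)
  then show "z ^ n = 1" using a_n bb_n by simp
qed

lemma Es_card: "card Es = 3*\<delta> - 2"
proof -
  have "card Es = card ({..<\<delta>} \<union> {\<delta>+1..<2*\<delta>}) + card {2*\<delta>+1..<3*\<delta>}"
    by (rule card_Un_disjoint) auto
  also have "card ({..<\<delta>} \<union> {\<delta>+1..<2*\<delta>}) = card {..<\<delta>} + card {\<delta>+1..<2*\<delta>}"
    by (rule card_Un_disjoint) auto
  finally show ?thesis using d2 by simp
qed

lemma zz_inj: "inj_on zz Es"
proof
  fix x y assume x: "x \<in> Es" and y: "y \<in> Es" and e: "zz x = zz y"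
  then have "(\<alpha>^b)^x = (\<alpha>^b)^y" using a_nz by simp
  moreover have "x < n" "y < n" using x y nd by auto
  ultimately show "x = y" using b_inj by blast
qed

lemma Zs_card: "card Zs = 3*\<delta> - 2"
  using zz_inj Es_card by (simp add: card_image)

lemma pw: "\<alpha>^(a*b) = (\<alpha>^b)^a" by (metis power_mult mult.commute)

lemma Es_eq: "{a + j | a j. a \<in> {0, 1, \<delta>+1, 2*\<delta>+1} \<and> j \<in> {..\<delta>-2}} = Es"
proof (intro set_eqI iffI)
  fix x assume "x \<in> {a + j | a j. a \<in> {0, 1, \<delta>+1, 2*\<delta>+1} \<and> j \<in> {..\<delta>-2}}"
  then show "x \<in> Es" using d2 by auto
next
  fix x assume x: "x \<in> Es"
  consider "x \<le> \<delta>-2" | "x = \<delta>-1" | "\<delta>+1 \<le> x \<and> x < 2*\<delta>" | "2*\<delta>+1 \<le> x \<and> x < 3*\<delta>"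
    using x d2 by force
  then show "x \<in> {a + j | a j. a \<in> {0, 1, \<delta>+1, 2*\<delta>+1} \<and> j \<in> {..\<delta>-2}}"
  proof cases
    case 1 then show ?thesis by (intro CollectI exI[of _ 0] exI[of _ x]) auto
  next
    case 2 then show ?thesis using d2 by (intro CollectI exI[of _ 1] exI[of _ "\<delta>-2"]) auto
  next
    case 3 then show ?thesis by (intro CollectI exI[of _ "\<delta>+1"] exI[of _ "x-(\<delta>+1)"]) auto
  next
    case 4 then show ?thesis by (intro CollectI exI[of _ "2*\<delta>+1"] exI[of _ "x-(2*\<delta>+1)"]) auto
  qed
qed

lemma setAB: "set_mult {\<alpha> ^ t, \<alpha> ^ (t + b), \<alpha> ^ (t + (\<delta> + 1) * b), \<alpha> ^ (t + (2 * \<delta> + 1) * b)}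
                {\<alpha> ^ (j * b) | j. j \<le> \<delta> - 2} = Zs"
proof -
  have A: "{\<alpha> ^ t, \<alpha> ^ (t + b), \<alpha> ^ (t + (\<delta> + 1) * b), \<alpha> ^ (t + (2 * \<delta> + 1) * b)}
      = zz ` {0, 1, \<delta>+1, 2*\<delta>+1}"
    by (simp add: power_add pw)
  have B: "{\<alpha> ^ (j * b) | j. j \<le> \<delta> - 2} = (\<lambda>j. (\<alpha>^b)^j) ` {..\<delta>-2}"
    by (auto simp: pw)
  have key: "zz a * (\<alpha>^b)^j = zz (a+j)" for a j by (simp add: power_add mult.assoc)
  show ?thesis unfolding set_mult_def A B Es_eq[symmetric]
  proof (intro set_eqI iffI)
    fix x assume "x \<in> {x * y |x y. x \<in> zz ` {0, 1, \<delta>+1, 2*\<delta>+1} \<and> y \<in> (\<lambda>j. (\<alpha>^b)^j) ` {..\<delta>-2}}"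
    then obtain a j where "a \<in> {0, 1, \<delta>+1, 2*\<delta>+1}" "j \<in> {..\<delta>-2}" and xe: "x = zz a * (\<alpha>^b)^j" by blast
    from xe have xa: "x = zz (a+j)" by (rule trans[OF _ key])
    have "a + j \<in> {a + j | a j. a \<in> {0, 1, \<delta>+1, 2*\<delta>+1} \<and> j \<in> {..\<delta>-2}}"
      using \<open>a \<in> _\<close> \<open>j \<in> _\<close> by blast
    then show "x \<in> zz ` {a + j | a j. a \<in> {0, 1, \<delta>+1, 2*\<delta>+1} \<and> j \<in> {..\<delta>-2}}"
      by (rule image_eqI[where f=zz and x="a+j", OF xa])
  next
    fix x assume "x \<in> zz ` {a + j | a j. a \<in> {0, 1, \<delta>+1, 2*\<delta>+1} \<and> j \<in> {..\<delta>-2}}"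
    then obtain a j where "a \<in> {0, 1, \<delta>+1, 2*\<delta>+1}" "j \<in> {..\<delta>-2}" and xe: "x = zz (a + j)" by blast
    from xe have X: "x = zz a * (\<alpha>^b)^j" by (rule trans[OF _ key[symmetric]])
    have A1: "zz a \<in> zz ` {0, 1, \<delta>+1, 2*\<delta>+1}" using \<open>a \<in> _\<close> by (rule imageI)
    have B1: "(\<alpha>^b)^j \<in> (\<lambda>j. (\<alpha>^b)^j) ` {..\<delta>-2}" using \<open>j \<in> _\<close> by (rule imageI)
    show "x \<in> {x * y |x y. x \<in> zz ` {0, 1, \<delta>+1, 2*\<delta>+1} \<and> y \<in> (\<lambda>j. (\<alpha>^b)^j) ` {..\<delta>-2}}"
      by (rule CollectI, rule exI[of _ "zz a"], rule exI[of _ "(\<alpha>^b)^j"], intro conjI X A1 B1)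
  qed
qed

lemma eval_split: "degree p < n \<Longrightarrow> poly p z =
   (\<Sum>i<2*\<delta>+1. coeff p (2*i) * (z^2)^i) + z * (\<Sum>i<2*\<delta>+1. coeff p (2*i+1) * (z^2)^i)"
  for p :: "'a poly"
proof -
  assume "degree p < n"
  then have "poly p z = (\<Sum>i<n. coeff p i * z^i)" by (rule poly_sum_lt)
  then have "poly p z = (\<Sum>i<2*(2*\<delta>+1). coeff p i * z^i)" by (simp only: n2m)
  also have "... = (\<Sum>i<2*\<delta>+1. coeff p (2*i) * z^(2*i)) + (\<Sum>i<2*\<delta>+1. coeff p (2*i+1) * z^(2*i+1))"
    by (rule sum_even_odd)
  also have "... = (\<Sum>i<2*\<delta>+1. coeff p (2*i) * (z^2)^i) + (\<Sum>i<2*\<delta>+1. z * (coeff p (2*i+1) * (z^2)^i))"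
  proof -
    have e1: "z^(2*i) = (z^2)^i" for i by (rule power_mult)
    have e2: "coeff p (2*i+1) * z^(2*i+1) = z * (coeff p (2*i+1) * (z^2)^i)" for i
    proof -
      have "z^(2*i+1) = z^(2*i) * z^1" by (rule power_add)
      also have "... = z * (z^2)^i" by (simp only: e1 power_one_right) (rule mult.commute)
      finally have "z^(2*i+1) = z * (z^2)^i" .
      then show ?thesis by (simp only:) (rule mult.left_commute)
    qed
    show ?thesis by (simp only: e1 e2)
  qed
  also have "... = (\<Sum>i<2*\<delta>+1. coeff p (2*i) * (z^2)^i) + z * (\<Sum>i<2*\<delta>+1. coeff p (2*i+1) * (z^2)^i)"
    by (simp only: sum_distrib_left)
  finally show ?thesis .
qed

lemma powsq: "((y^j)^2)^i = (y^(2*i))^j" for y :: "'b::comm_monoid_mult"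
proof -
  have "((y^j)^2)^i = y^(j*2*i)" by (simp only: power_mult)
  also have "j*2*i = 2*i*j" by simp
  also have "y^(2*i*j) = (y^(2*i))^j" by (simp only: power_mult)
  finally show ?thesis .
qed

lemma sumform: "(zz j ^ 2) ^ i = (\<alpha>^t)^(2*i) * ((\<alpha>^b)^(2*i))^j"
proof -
  have "(zz j ^ 2) ^ i = ((\<alpha>^t)^2)^i * (((\<alpha>^b)^j)^2)^i" by (simp only: power_mult_distrib)
  also have "((\<alpha>^t)^2)^i = (\<alpha>^t)^(2*i)" by (simp only: power_mult)
  also have "(((\<alpha>^b)^j)^2)^i = ((\<alpha>^b)^(2*i))^j" by (rule powsq)
  finally show ?thesis .
qed


lemma pair_zero:
  fixes p :: "'a poly"
  assumes dp: "degree p < n" and vz: "\<forall>z\<in>Zs. poly p z = 0" and j: "j \<le> \<delta> - 2"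
  shows "(\<Sum>i<2*\<delta>+1. coeff p (2*i) * (zz j ^ 2)^i) = 0 \<and> (\<Sum>i<2*\<delta>+1. coeff p (2*i+1) * (zz j ^ 2)^i) = 0"
proof -
  have j1: "j \<in> Es" using j d2 by auto
  have j2: "j + (2*\<delta>+1) \<in> Es" using j d2 by auto
  have p1: "poly p (zz j) = 0" using vz j1 by blast
  have p2: "poly p (zz (j + (2*\<delta>+1))) = 0" using vz j2 by blast
  have e1: "(\<Sum>i<2*\<delta>+1. coeff p (2*i) * (zz j ^ 2)^i) + zz j * (\<Sum>i<2*\<delta>+1. coeff p (2*i+1) * (zz j ^ 2)^i) = 0"
    using trans[OF sym[OF eval_split[OF dp, of "zz j"]] p1] .
  have "poly p (zz (j + (2*\<delta>+1))) = (\<Sum>i<2*\<delta>+1. coeff p (2*i) * (zz j ^ 2)^i) + (- zz j) * (\<Sum>i<2*\<delta>+1. coeff p (2*i+1) * (zz j ^ 2)^i)"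
    by (simp only: eval_split[OF dp] zz_neg power2_minus)
  then have e2: "(\<Sum>i<2*\<delta>+1. coeff p (2*i) * (zz j ^ 2)^i) + (- zz j) * (\<Sum>i<2*\<delta>+1. coeff p (2*i+1) * (zz j ^ 2)^i) = 0"
    using p2 by simp
  show ?thesis by (rule two_eq[OF e1 e2 two_nz zz_nz])
qed

lemma b_cancel: "x \<le> y \<Longrightarrow> (\<alpha>^b)^x = (\<alpha>^b)^y \<Longrightarrow> n dvd (y - x)"
proof -
  assume xy: "x \<le> y" "(\<alpha>^b)^x = (\<alpha>^b)^y"
  have "(\<alpha>^b)^y = (\<alpha>^b)^(x + (y-x))" using xy by simp
  also have "... = (\<alpha>^b)^x * (\<alpha>^b)^(y-x)" by (simp only: power_add)
  finally have "(\<alpha>^b)^x * (\<alpha>^b)^(y-x) = (\<alpha>^b)^x * 1" using xy by simp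
  then have "(\<alpha>^b)^(y-x) = 1" using a_nz by auto
  then show "n dvd y - x" using b_eq1 by simp
qed

lemma y1_inj: "inj_on (\<lambda>i. (\<alpha>^b)^(2*i)) {..<2*\<delta>+1}"
proof (rule inj_onI)
  fix x y assume x: "x \<in> {..<2*\<delta>+1}" and y: "y \<in> {..<2*\<delta>+1}" and e: "(\<alpha>^b)^(2*x) = (\<alpha>^b)^(2*y)"
  have "2*x < n" "2*y < n" using x y nd by auto
  then have "2*x = 2*y" using b_inj e by blast
  then show "x = y" by simp
qed

lemma y2_inj_aux: "x \<le> y \<Longrightarrow> y < 2*\<delta>+1 \<Longrightarrow> (\<alpha>^b)^(2*\<delta>*x) = (\<alpha>^b)^(2*\<delta>*y) \<Longrightarrow> x = y"
proof -
  assume xy: "x \<le> y" "y < 2*\<delta>+1" and e: "(\<alpha>^b)^(2*\<delta>*x) = (\<alpha>^b)^(2*\<delta>*y)"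
  have "n dvd (2*\<delta>*y - 2*\<delta>*x)" using b_cancel[OF _ e] xy by simp
  also have "2*\<delta>*y - 2*\<delta>*x = 2*(\<delta>*(y-x))" by (simp add: diff_mult_distrib2)
  finally have "2*(2*\<delta>+1) dvd 2*(\<delta>*(y-x))" using n2m by simp
  then have "(2*\<delta>+1) dvd \<delta>*(y-x)" by (metis nat_mult_dvd_cancel_disj zero_neq_numeral)
  moreover have "coprime (2*\<delta>+1) \<delta>" using coprime_d[of \<delta>] by (simp add: coprime_commute)
  ultimately have "(2*\<delta>+1) dvd (y-x)" by (simp add: coprime_dvd_mult_right_iff)
  moreover have "y - x < 2*\<delta>+1" using xy by simp
  ultimately have "y - x = 0" by (metis dvd_imp_le gr0I not_le)
  then show "x = y" using xy by simp
qed

lemma y2_inj: "inj_on (\<lambda>i. (\<alpha>^b)^(2*\<delta>*i)) {..<2*\<delta>+1}"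
proof (rule inj_onI)
  fix x y assume x: "x \<in> {..<2*\<delta>+1}" and y: "y \<in> {..<2*\<delta>+1}" and e: "(\<alpha>^b)^(2*\<delta>*x) = (\<alpha>^b)^(2*\<delta>*y)"
  show "x = y"
  proof (cases "x \<le> y")
    case True then show ?thesis using y2_inj_aux[OF True _ e] y by simp
  next
    case False then show ?thesis using y2_inj_aux[OF _ _ e[symmetric]] x by simp
  qed
qed

lemma ypow: "((\<alpha>^b)^(2*\<delta>*i))^(3+k) = ((\<alpha>^b)^(2*i))^((\<delta>*(3+k)) mod (2*\<delta>+1))"
proof -
  define r where "r = (\<delta>*(3+k)) mod (2*\<delta>+1)"
  define D where "D = \<delta>*(3+k)"
  have r2: "2*r = (2*D) mod n" unfolding r_def D_def n2m by (rule mod_mult_mult1[symmetric])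
  have "((\<alpha>^b)^(2*\<delta>*i))^(3+k) = (\<alpha>^b)^(i*(2*D))"
    unfolding D_def by (simp only: power_mult[symmetric]) (simp add: mult_ac)
  also have "... = (\<alpha>^b)^((i*(2*D)) mod n)" by (rule b_mod)
  also have "(i*(2*D)) mod n = (i*((2*D) mod n)) mod n" by (simp add: mod_mult_right_eq)
  also have "(\<alpha>^b)^((i*((2*D) mod n)) mod n) = (\<alpha>^b)^(i*((2*D) mod n))" by (rule b_mod[symmetric])
  also have "... = ((\<alpha>^b)^(2*i))^r" unfolding r2[symmetric]
    by (simp only: power_mult[symmetric]) (simp add: mult_ac)
  finally show ?thesis unfolding r_def .
qed

lemma W1:
  fixes c :: "nat \<Rightarrow> 'a"
  assumes ev: "\<forall>j\<le>\<delta>-2. (\<Sum>i<2*\<delta>+1. c i * (zz j ^ 2)^i) = 0" and nz: "\<exists>i<2*\<delta>+1. c i \<noteq> 0"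
  shows "\<delta> \<le> card {i. i < 2*\<delta>+1 \<and> c i \<noteq> 0}"
proof -
  have "\<delta> - 1 < card {i. i < 2*\<delta>+1 \<and> c i * (\<alpha>^t)^(2*i) \<noteq> 0}"
  proof (rule weight_bound[where y = "\<lambda>i. (\<alpha>^b)^(2*i)" and s = 0])
    show "inj_on (\<lambda>i. (\<alpha>^b)^(2*i)) {..<2*\<delta>+1}" by (rule y1_inj)
    show "\<forall>i<2*\<delta>+1. (\<alpha>^b)^(2*i) \<noteq> 0" using b_nz by simp
    show "\<forall>k<\<delta>-1. (\<Sum>i<2*\<delta>+1. c i * (\<alpha>^t)^(2*i) * ((\<alpha>^b)^(2*i))^(0+k)) = 0"
    proof (intro allI impI)
      fix k assume "k < \<delta> - 1"
      then have "k \<le> \<delta> - 2" by simp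
      then have "(\<Sum>i<2*\<delta>+1. c i * (zz k ^ 2)^i) = 0" using ev by blast
      then show "(\<Sum>i<2*\<delta>+1. c i * (\<alpha>^t)^(2*i) * ((\<alpha>^b)^(2*i))^(0+k)) = 0"
        by (simp only: sumform add_0 mult.assoc)
    qed
    show "\<exists>i<2*\<delta>+1. c i * (\<alpha>^t)^(2*i) \<noteq> 0" using nz a_nz by auto
  qed
  moreover have "{i. i < 2*\<delta>+1 \<and> c i * (\<alpha>^t)^(2*i) \<noteq> 0} = {i. i < 2*\<delta>+1 \<and> c i \<noteq> 0}"
    using a_nz by auto
  ultimately show ?thesis using d2 by simp
qed

lemma W2:
  fixes c :: "nat \<Rightarrow> 'a"
  assumes ev: "\<forall>j<2*\<delta>+1. j \<noteq> \<delta> \<longrightarrow> j \<noteq> 2*\<delta> \<longrightarrow> (\<Sum>i<2*\<delta>+1. c i * (zz j ^ 2)^i) = 0"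
    and nz: "\<exists>i<2*\<delta>+1. c i \<noteq> 0"
  shows "2*\<delta> \<le> card {i. i < 2*\<delta>+1 \<and> c i \<noteq> 0}"
proof -
  have "2*\<delta> - 1 < card {i. i < 2*\<delta>+1 \<and> c i * (\<alpha>^t)^(2*i) \<noteq> 0}"
  proof (rule weight_bound[where y = "\<lambda>i. (\<alpha>^b)^(2*\<delta>*i)" and s = 3])
    show "inj_on (\<lambda>i. (\<alpha>^b)^(2*\<delta>*i)) {..<2*\<delta>+1}" by (rule y2_inj)
    show "\<forall>i<2*\<delta>+1. (\<alpha>^b)^(2*\<delta>*i) \<noteq> 0" using b_nz by simp
    show "\<forall>k<2*\<delta>-1. (\<Sum>i<2*\<delta>+1. c i * (\<alpha>^t)^(2*i) * ((\<alpha>^b)^(2*\<delta>*i))^(3+k)) = 0"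
    proof (intro allI impI)
      fix k assume k: "k < 2*\<delta> - 1"
      define r where "r = (\<delta>*(3+k)) mod (2*\<delta>+1)"
      have r1: "r < 2*\<delta>+1" unfolding r_def by simp
      have r2: "r \<noteq> \<delta>" "r \<noteq> 2*\<delta>" using rmod[OF k] unfolding r_def by auto
      have "(\<Sum>i<2*\<delta>+1. c i * (zz r ^ 2)^i) = 0" using ev r1 r2 by blast
      then have "(\<Sum>i<2*\<delta>+1. c i * ((\<alpha>^t)^(2*i) * ((\<alpha>^b)^(2*i))^r)) = 0"
        by (simp only: sumform)
      then show "(\<Sum>i<2*\<delta>+1. c i * (\<alpha>^t)^(2*i) * ((\<alpha>^b)^(2*\<delta>*i))^(3+k)) = 0"
        unfolding r_def by (simp only: ypow) (simp only: mult.assoc)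
    qed
    show "\<exists>i<2*\<delta>+1. c i * (\<alpha>^t)^(2*i) \<noteq> 0" using nz a_nz by auto
  qed
  moreover have "{i. i < 2*\<delta>+1 \<and> c i * (\<alpha>^t)^(2*i) \<noteq> 0} = {i. i < 2*\<delta>+1 \<and> c i \<noteq> 0}"
    using a_nz by auto
  ultimately show ?thesis using d2 by simp
qed


lemma J_Es: "j < 2*\<delta>+1 \<Longrightarrow> j \<noteq> \<delta> \<Longrightarrow> j \<noteq> 2*\<delta> \<Longrightarrow> j \<in> Es"
  by auto

lemma eS:
  fixes p :: "'a poly"
  assumes dp: "degree p < n" and vz: "\<forall>z\<in>Zs. poly p z = 0" and j: "j \<in> Es"
  shows "(\<Sum>i<2*\<delta>+1. coeff p (2*i) * (zz j ^ 2)^i) + zz j * (\<Sum>i<2*\<delta>+1. coeff p (2*i+1) * (zz j ^ 2)^i) = 0"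
proof -
  have "poly p (zz j) = 0" using vz j by blast
  then show ?thesis using trans[OF sym[OF eval_split[OF dp, of "zz j"]]] by blast
qed

lemma nz_parity:
  fixes p :: "'a poly"
  assumes dp: "degree p < n" and p0: "p \<noteq> 0"
  shows "(\<exists>i<2*\<delta>+1. coeff p (2*i) \<noteq> 0) \<or> (\<exists>i<2*\<delta>+1. coeff p (2*i+1) \<noteq> 0)"
proof -
  have c: "coeff p (degree p) \<noteq> 0" using p0 by simp
  show ?thesis
  proof (cases "even (degree p)")
    case True
    then obtain i where i: "degree p = 2*i" by (metis evenE)
    then have "i < 2*\<delta>+1" using dp nd by simp
    then show ?thesis using c i by auto
  next
    case False
    then obtain i where i: "degree p = 2*i+1" by (metis oddE)
    then have "i < 2*\<delta>+1" using dp nd by simp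
    then show ?thesis using c i by auto
  qed
qed

lemma lower:
  fixes p :: "'a poly"
  assumes dp: "degree p < n" and vz: "\<forall>z\<in>Zs. poly p z = 0" and p0: "p \<noteq> 0"
  shows "2*\<delta> \<le> card {i. i < n \<and> coeff p i \<noteq> 0}"
proof -
  have split: "card {i. i < n \<and> coeff p i \<noteq> 0} = card {i. i < 2*\<delta>+1 \<and> coeff p (2*i) \<noteq> 0} + card {i. i < 2*\<delta>+1 \<and> coeff p (2*i+1) \<noteq> 0}"
    unfolding n2m by (rule card_split)
  have pz0: "\<forall>j\<le>\<delta>-2. (\<Sum>i<2*\<delta>+1. coeff p (2*i) * (zz j ^ 2)^i) = 0"
    using pair_zero[OF dp vz] by blast
  have pz1: "\<forall>j\<le>\<delta>-2. (\<Sum>i<2*\<delta>+1. coeff p (2*i+1) * (zz j ^ 2)^i) = 0"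
    using pair_zero[OF dp vz] by blast
  consider (both) "(\<exists>i<2*\<delta>+1. coeff p (2*i) \<noteq> 0) \<and> (\<exists>i<2*\<delta>+1. coeff p (2*i+1) \<noteq> 0)"
    | (odd0) "(\<exists>i<2*\<delta>+1. coeff p (2*i) \<noteq> 0) \<and> \<not>(\<exists>i<2*\<delta>+1. coeff p (2*i+1) \<noteq> 0)"
    | (even0) "\<not>(\<exists>i<2*\<delta>+1. coeff p (2*i) \<noteq> 0) \<and> (\<exists>i<2*\<delta>+1. coeff p (2*i+1) \<noteq> 0)"
    using nz_parity[OF dp p0] by blast
  then show ?thesis
  proof cases
    case both
    have "\<delta> \<le> card {i. i < 2*\<delta>+1 \<and> coeff p (2*i) \<noteq> 0}"
      using W1[of "\<lambda>i. coeff p (2*i)"] pz0 both by blast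
    moreover have "\<delta> \<le> card {i. i < 2*\<delta>+1 \<and> coeff p (2*i+1) \<noteq> 0}"
      using W1[of "\<lambda>i. coeff p (2*i+1)"] pz1 both by blast
    ultimately show ?thesis using split by simp
  next
    case odd0
    have "\<forall>j<2*\<delta>+1. j \<noteq> \<delta> \<longrightarrow> j \<noteq> 2*\<delta> \<longrightarrow> (\<Sum>i<2*\<delta>+1. coeff p (2*i) * (zz j ^ 2)^i) = 0"
    proof (intro allI impI)
      fix j assume "j < 2*\<delta>+1" "j \<noteq> \<delta>" "j \<noteq> 2*\<delta>"
      then have "j \<in> Es" by (rule J_Es)
      note e = eS[OF dp vz this]
      have "(\<Sum>i<2*\<delta>+1. coeff p (2*i+1) * (zz j ^ 2)^i) = 0" using odd0 by simp
      then show "(\<Sum>i<2*\<delta>+1. coeff p (2*i) * (zz j ^ 2)^i) = 0" using e by simp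
    qed
    then have "2*\<delta> \<le> card {i. i < 2*\<delta>+1 \<and> coeff p (2*i) \<noteq> 0}"
      using W2[of "\<lambda>i. coeff p (2*i)"] odd0 by blast
    then show ?thesis using split by simp
  next
    case even0
    have "\<forall>j<2*\<delta>+1. j \<noteq> \<delta> \<longrightarrow> j \<noteq> 2*\<delta> \<longrightarrow> (\<Sum>i<2*\<delta>+1. coeff p (2*i+1) * (zz j ^ 2)^i) = 0"
    proof (intro allI impI)
      fix j assume "j < 2*\<delta>+1" "j \<noteq> \<delta>" "j \<noteq> 2*\<delta>"
      then have "j \<in> Es" by (rule J_Es)
      note e = eS[OF dp vz this]
      have "(\<Sum>i<2*\<delta>+1. coeff p (2*i) * (zz j ^ 2)^i) = 0" using even0 by simp
      then have "zz j * (\<Sum>i<2*\<delta>+1. coeff p (2*i+1) * (zz j ^ 2)^i) = 0" using e by simp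
      then show "(\<Sum>i<2*\<delta>+1. coeff p (2*i+1) * (zz j ^ 2)^i) = 0" using zz_nz[of j] mult_eq_0_iff by blast
    qed
    then have "2*\<delta> \<le> card {i. i < 2*\<delta>+1 \<and> coeff p (2*i+1) \<noteq> 0}"
      using W2[of "\<lambda>i. coeff p (2*i+1)"] even0 by blast
    then show ?thesis using split by simp
  qed
qed

lemma loc_even:
  fixes p :: "'a poly"
  assumes dp: "degree p < n" and vz: "\<forall>z\<in>Zs. poly p z = 0"
    and ex: "\<exists>x. x < n \<and> even x \<and> coeff p x \<noteq> 0"
  shows "\<delta> \<le> card {x. x < n \<and> even x \<and> coeff p x \<noteq> 0}"
proof -
  have c: "card {x. x < n \<and> even x \<and> coeff p x \<noteq> 0} = card {i. i < 2*\<delta>+1 \<and> coeff p (2*i) \<noteq> 0}"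
    unfolding n2m by (rule card_even)
  obtain x where x: "x < n" "even x" "coeff p x \<noteq> 0" using ex by blast
  then obtain i where i: "x = 2*i" by (metis evenE)
  have "\<exists>i<2*\<delta>+1. coeff p (2*i) \<noteq> 0" using x i nd by (intro exI[of _ i]) auto
  moreover have "\<forall>j\<le>\<delta>-2. (\<Sum>i<2*\<delta>+1. coeff p (2*i) * (zz j ^ 2)^i) = 0"
    using pair_zero[OF dp vz] by blast
  ultimately show ?thesis unfolding c using W1[of "\<lambda>i. coeff p (2*i)"] by blast
qed

lemma loc_odd:
  fixes p :: "'a poly"
  assumes dp: "degree p < n" and vz: "\<forall>z\<in>Zs. poly p z = 0"
    and ex: "\<exists>x. x < n \<and> odd x \<and> coeff p x \<noteq> 0"
  shows "\<delta> \<le> card {x. x < n \<and> odd x \<and> coeff p x \<noteq> 0}"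
proof -
  have c: "card {x. x < n \<and> odd x \<and> coeff p x \<noteq> 0} = card {i. i < 2*\<delta>+1 \<and> coeff p (2*i+1) \<noteq> 0}"
    unfolding n2m by (rule card_odd)
  obtain x where x: "x < n" "odd x" "coeff p x \<noteq> 0" using ex by blast
  then obtain i where i: "x = 2*i+1" by (metis oddE)
  have "\<exists>i<2*\<delta>+1. coeff p (2*i+1) \<noteq> 0" using x i nd by (intro exI[of _ i]) auto
  moreover have "\<forall>j\<le>\<delta>-2. (\<Sum>i<2*\<delta>+1. coeff p (2*i+1) * (zz j ^ 2)^i) = 0"
    using pair_zero[OF dp vz] by blast
  ultimately show ?thesis unfolding c using W1[of "\<lambda>i. coeff p (2*i+1)"] by blast
qed


lemma odd_coeff_step: "coeff ([:a, 0, 1:] * Q) (2*k+1) = a * coeff Q (2*k+1) + (if k = 0 then 0 else coeff Q (2*(k-1)+1))"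
  for Q :: "'a poly"
  by (cases k) (simp_all add: coeff_pCons)

lemma odd_coeff_prod: "finite J \<Longrightarrow> coeff (\<Prod>j\<in>J. [:f j, 0, 1:]) (2*k+1) = (0::'a)"
proof (induction J arbitrary: k rule: finite_induct)
  case empty then show ?case by simp
next
  case (insert x F)
  have "(\<Prod>j\<in>insert x F. [:f j, 0, 1:]) = [:f x, 0, 1:] * (\<Prod>j\<in>F. [:f j, 0, 1:])"
    by (rule prod.insert[OF insert.hyps])
  then show ?case using insert.IH by (simp only: odd_coeff_step) simp
qed

abbreviation "Js \<equiv> {..<\<delta>} \<union> {\<delta>+1..<2*\<delta>}"
abbreviation "P0 \<equiv> (\<Prod>j\<in>Js. [:- (zz j ^ 2), 0, 1:])"

lemma Js_card: "card Js = 2*\<delta> - 1"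
proof -
  have "card Js = card {..<\<delta>} + card {\<delta>+1..<2*\<delta>}" by (rule card_Un_disjoint) auto
  then show ?thesis using d2 by simp
qed

lemma P0_nz: "P0 \<noteq> 0"
  by (simp add: prod_zero_iff)

lemma P0_deg: "degree P0 = 4*\<delta> - 2"
proof -
  have "degree P0 = (\<Sum>j\<in>Js. degree [:- (zz j ^ 2), 0, 1:])"
    by (rule degree_prod_eq_sum_degree) simp
  also have "... = (\<Sum>j\<in>Js. 2)" by simp
  also have "... = 2 * card Js" by simp
  finally show ?thesis using Js_card by simp
qed

lemma P0_vz: "\<forall>z\<in>Zs. poly P0 z = 0"
proof
  fix z assume "z \<in> Zs"
  then obtain e where e: "e \<in> Es" and z: "z = zz e" by blast
  obtain j where j: "j \<in> Js" and sq: "zz e ^ 2 = zz j ^ 2"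
  proof (cases "e < 2*\<delta>")
    case True
    then have "e \<in> Js" using e by auto
    then show ?thesis using that by blast
  next
    case False
    then have e': "e = (e - (2*\<delta>+1)) + (2*\<delta>+1)" and j: "e - (2*\<delta>+1) \<in> Js" using e by auto
    have "zz e = - zz (e - (2*\<delta>+1))" by (subst e') (rule zz_neg)
    then have "zz e ^ 2 = zz (e - (2*\<delta>+1)) ^ 2" by simp
    then show ?thesis using that j by blast
  qed
  have "poly P0 z = (\<Prod>j\<in>Js. poly [:- (zz j ^ 2), 0, 1:] z)" by (rule poly_prod)
  also have "... = 0"
  proof (rule prod_zero)
    show "finite Js" by simp
    show "\<exists>a\<in>Js. poly [:- (zz a ^ 2), 0, 1:] z = 0"
      using j sq z by (intro bexI[of _ j]) (simp_all add: power2_eq_square)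
  qed
  finally show "poly P0 z = 0" .
qed

lemma P0_wt: "card {i. i < n \<and> coeff P0 i \<noteq> 0} \<le> 2*\<delta>"
proof -
  have split: "card {i. i < n \<and> coeff P0 i \<noteq> 0} = card {i. i < 2*\<delta>+1 \<and> coeff P0 (2*i) \<noteq> 0} + card {i. i < 2*\<delta>+1 \<and> coeff P0 (2*i+1) \<noteq> 0}"
    unfolding n2m by (rule card_split)
  have oc: "coeff P0 (2*i+1) = 0" for i
    by (rule odd_coeff_prod) simp
  have emp: "{i. i < 2*\<delta>+1 \<and> coeff P0 (2*i+1) \<noteq> 0} = {}"
    using oc by blast
  have "{i. i < 2*\<delta>+1 \<and> coeff P0 (2*i) \<noteq> 0} \<subseteq> {..<2*\<delta>}"
  proof
    fix i assume i: "i \<in> {i. i < 2*\<delta>+1 \<and> coeff P0 (2*i) \<noteq> 0}"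
    then have "2*i \<le> degree P0" using le_degree by blast
    then show "i \<in> {..<2*\<delta>}" using P0_deg d2 by simp
  qed
  then have l: "card {i. i < 2*\<delta>+1 \<and> coeff P0 (2*i) \<noteq> 0} \<le> 2*\<delta>"
  proof -
    have "card {i. i < 2*\<delta>+1 \<and> coeff P0 (2*i) \<noteq> 0} \<le> card {..<2*\<delta>}"
      by (rule card_mono[OF finite_lessThan \<open>_ \<subseteq> {..<2*\<delta>}\<close>])
    then show ?thesis by (simp only: card_lessThan)
  qed
  show ?thesis unfolding split emp using l by (simp only: card.empty add_0_right)
qed


lemma main:
  "let A = {\<alpha> ^ t, \<alpha> ^ (t + b), \<alpha> ^ (t + (\<delta> + 1) * b), \<alpha> ^ (t + (2 * \<delta> + 1) * b)};
       B = {\<alpha> ^ (j * b) | j. j \<le> \<delta> - 2};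
       C = cyclic_code n (set_mult A B)
   in optimal_LRC n C (\<delta> + 2) \<delta> \<and> code_dim C = \<delta> + 4 \<and> min_dist n C = 2 * \<delta>"
proof -
  define C where "C = cyclic_code n Zs"
  have CC: "C = {coeff p | p. degree p < n \<and> (\<forall>z\<in>Zs. poly p z = 0)}"
    unfolding C_def by (rule code_char[OF _ Zs_rt n_pos]) simp
  have dim: "code_dim C = \<delta> + 4"
  proof -
    have "code_dim C = n - card Zs" unfolding C_def
      by (rule code_dim_gen[OF _ Zs_rt n_pos]) (use Zs_card nd in simp_all)
    then show ?thesis using Zs_card nd d2 by simp
  qed
  have md: "min_dist n C = 2*\<delta>"
  proof -
    let ?W = "{hamming_wt n c | c. c \<in> C \<and> (\<exists>i<n. c i \<noteq> 0)}"
    have fin: "finite ?W"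
    proof (rule finite_subset[of _ "{..n}"])
      show "?W \<subseteq> {..n}"
      proof
        fix w assume "w \<in> ?W"
        then obtain c :: "nat \<Rightarrow> 'a" where w: "w = hamming_wt n c" by blast
        have "card {i. i < n \<and> c i \<noteq> 0} \<le> card {..<n}" by (rule card_mono) auto
        then show "w \<in> {..n}" unfolding w hamming_wt_def by simp
      qed
    qed simp
    have lb: "2*\<delta> \<le> w" if wW: "w \<in> ?W" for w
    proof -
      obtain c where c: "c \<in> C" "\<exists>i<n. c i \<noteq> 0" and w: "w = hamming_wt n c" using wW by blast
      obtain p where p: "c = coeff p" "degree p < n" "\<forall>z\<in>Zs. poly p z = 0" using c(1) unfolding CC by blast
      have "p \<noteq> 0" using c(2) p(1) by auto
      then show ?thesis unfolding w hamming_wt_def p(1) using lower[OF p(2) p(3)] by blast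
    qed
    have mem: "2*\<delta> \<in> ?W"
    proof -
      have dP: "degree P0 < n" using P0_deg nd by simp
      have c: "coeff P0 \<in> C" unfolding CC using dP P0_vz by blast
      have "coeff P0 (degree P0) \<noteq> 0" using P0_nz by (rule leading_coeff_neq_0)
      then have nz: "\<exists>i<n. coeff P0 i \<noteq> 0" using dP by blast
      have h: "hamming_wt n (coeff P0) = 2*\<delta>"
        unfolding hamming_wt_def by (rule le_antisym[OF P0_wt lower[OF dP P0_vz P0_nz]])
      show ?thesis
        by (intro CollectI exI[of _ "coeff P0"] conjI) (rule sym[OF h], rule c, rule nz)
    qed
    show ?thesis unfolding min_dist_def by (rule Min_eqI[OF fin lb mem])
  qed
  have loc: "has_locality n C (\<delta>+2) \<delta> i" if i: "i < n" for i
  proof -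
    define S where "S = {x. x < n \<and> (even x \<longleftrightarrow> even i)}"
    have cardS: "card S = 2*\<delta>+1"
    proof (cases "even i")
      case True
      then have "S = {x. x < 2*(2*\<delta>+1) \<and> even x \<and> True}" unfolding S_def using n2m by auto
      moreover have "card {x. x < 2*(2*\<delta>+1) \<and> even x \<and> True} = card {j. j < 2*\<delta>+1 \<and> True}"
        by (rule card_even)
      ultimately show ?thesis by simp
    next
      case False
      then have "S = {x. x < 2*(2*\<delta>+1) \<and> odd x \<and> True}" unfolding S_def using n2m by auto
      moreover have "card {x. x < 2*(2*\<delta>+1) \<and> odd x \<and> True} = card {j. j < 2*\<delta>+1 \<and> True}"
        by (rule card_odd)
      ultimately show ?thesis by simp
    qed
    have pd: "punct_dist_ge C S \<delta>"
      unfolding punct_dist_ge_def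
    proof (intro ballI impI)
      fix c assume cC: "c \<in> C" and ex: "\<exists>x\<in>S. c x \<noteq> 0"
      obtain p where p: "c = coeff p" "degree p < n" "\<forall>z\<in>Zs. poly p z = 0" using cC unfolding CC by blast
      show "\<delta> \<le> card {x \<in> S. c x \<noteq> 0}"
      proof (cases "even i")
        case True
        then have e: "{x \<in> S. c x \<noteq> 0} = {x. x < n \<and> even x \<and> coeff p x \<noteq> 0}" unfolding S_def p(1) by auto
        have "\<exists>x. x < n \<and> even x \<and> coeff p x \<noteq> 0" using ex True unfolding S_def p(1) by auto
        then show ?thesis unfolding e by (rule loc_even[OF p(2) p(3)])
      next
        case False
        then have e: "{x \<in> S. c x \<noteq> 0} = {x. x < n \<and> odd x \<and> coeff p x \<noteq> 0}" unfolding S_def p(1) by auto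
        have "\<exists>x. x < n \<and> odd x \<and> coeff p x \<noteq> 0" using ex False unfolding S_def p(1) by auto
        then show ?thesis unfolding e by (rule loc_odd[OF p(2) p(3)])
      qed
    qed
    have "S \<subseteq> {0..<n}" "i \<in> S" "card S \<le> \<delta> + 2 + \<delta> - 1" using i cardS unfolding S_def by auto
    then show ?thesis unfolding has_locality_def using pd by blast
  qed
  have ceil: "\<lceil>real (\<delta> + 4) / real (\<delta> + 2)\<rceil> = 2"
    by (rule ceiling_unique) (use d2 in \<open>simp_all add: field_simps\<close>)
  have opt: "optimal_LRC n C (\<delta>+2) \<delta>"
    unfolding optimal_LRC_def is_LRC_def dim md ceil using loc d2 nd by simp
  show ?thesis unfolding Let_def setAB C_def[symmetric] using opt dim md by simp
qed

end

theorem proposition4p9: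
  fixes \<alpha> :: "'a::{finite, field}" and \<delta> n b t :: nat
  assumes "2 \<le> \<delta>"
    and "n = 4 * \<delta> + 2"
    and "n dvd (card (UNIV :: 'a set) - 1)"
    and "prim_root n \<alpha>"
    and "0 < b" and "coprime b n"
    and "t < n"
  shows "let A = {\<alpha> ^ t, \<alpha> ^ (t + b), \<alpha> ^ (t + (\<delta> + 1) * b), \<alpha> ^ (t + (2 * \<delta> + 1) * b)};
             B = {\<alpha> ^ (j * b) | j. j \<le> \<delta> - 2};
             C = cyclic_code n (set_mult A B)
         in optimal_LRC n C (\<delta> + 2) \<delta> \<and> code_dim C = \<delta> + 4 \<and> min_dist n C = 2 * \<delta>"
    by (rule main[OF assms(1) assms(2) assms(4) assms(6)])

end
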